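(* Let $n\ge4$, and let $x_1,\dots,x_{2n}$ and $z_2,z_4,\dots,z_{2n}$ be the elements of the boundary algebra $e_b\Lambda_{Q_F(n)}e_b$ defined below. Then for all $k\in[1,n]$, with indices modulo $2n$, $$\text{(I)}\quad z_{2k}z_{2k-2}=x_{2k+1}x_{2k+2}\cdots x_{2k+2(n-2)},\qquad \text{(II)}\quad x_{2k+1}x_{2k+2}z_{2k+2}=z_{2k}x_{2k-1}x_{2k}$$ hold in $e_b\Lambda_{Q_F(n)}e_b$.
   Context: Paths are composed from left to right. The dimer algebra of a dimer model with boundary $Q$ is $\Lambda_Q=\mathbb{C}Q/\langle\partial W\rangle$, where $\partial W$ consists of the relations $p_1\cdots p_k=q_1\cdots q_l$, one for each internal arrow $\alpha$ lying on the anticlockwise face boundary $\alpha p_1\cdots p_k$ and the clockwise face boundary $\alpha q_1\cdots q_l$; $e_b$ is the sum of the trivial paths at the boundary vertices. GL$_2$-dimer quiver: for a triangulation $T$ of a convex $n$-gon $P$ with vertices $v_1,\dots,v_n$ anticlockwise, subdivide each triangle of $T$ by the midlines into $4$ small triangles; put a black node at the midpoint of each half-side of each triangle and in each downward (middle) small triangle, and a white node in each of the three upward small triangles; join nodes of different colour lying in the same small triangle or in small triangles sharing a side. The quiver has a vertex for each component of the complement of this graph in $P$ and an arrow across each edge, oriented with the white endpoint on its left; white nodes give anticlockwise faces, black nodes of degree $\ge 2$ clockwise faces; 2-cycles of internal arrows are removed via the potential (reduced quiver). $Q_F(n)$: the reduced quiver for the fan triangulation with diagonals $v_1v_{k+2}$,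 $k=1,\dots,n-3$. It has boundary vertices $1,\dots,2n$ (anticlockwise, $2j-1$ being the component at corner $v_j$), internal vertices $i_1,\dots,i_{n-3}$, and arrows $x_k:k-1\to k$ ($k\in[1,2n]$, mod $2n$), $y_4:4\to2$, $y_{2n}:2n\to 2n-2$, $\alpha_0:2\to i_1$, $\alpha_k:i_k\to i_{k+1}$ ($1\le k<n-3$), $\alpha_{n-3}:i_{n-3}\to 2n$, $\beta_{k-1}:i_k\to 2k+2$ and $\gamma_k:2k+4\to i_k$ ($1\le k\le n-3$). The paths $z_{2k}:2k\to 2k-2$ are $z_{2k}:=\gamma_{k-2}\beta_{k-3}$ for $k=3,\dots,n-1$, $z_4:=y_4$, $z_2:=\alpha_0\alpha_1\cdots\alpha_{n-3}$, $z_{2n}:=y_{2n}$. *)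

theory Defs
  imports Complex_Main
begin

datatype vert = Bd nat | Iv nat

text \<open>Arrows: X k is x_k, Y4 is y_4, Y2n is y_{2n}, Al k is alpha_k, Be k is beta_k,
  Ga k is gamma_k.\<close>
datatype arr = X nat | Y4 | Y2n | Al nat | Be nat | Ga nat

text \<open>Boundary index modulo 2n, with representatives in [1,2n].\<close>
definition bix :: "nat \<Rightarrow> nat \<Rightarrow> nat" where
  "bix n k = (k + 2*n - 1) mod (2*n) + 1"

fun asrc :: "nat \<Rightarrow> arr \<Rightarrow> vert" where
  "asrc n (X k) = Bd (bix n (k - 1))"
| "asrc n Y4 = Bd 4"
| "asrc n Y2n = Bd (2*n)"
| "asrc n (Al k) = (if k = 0 then Bd 2 else Iv k)"
| "asrc n (Be j) = Iv (j + 1)"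
| "asrc n (Ga k) = Bd (2*k + 4)"

fun atgt :: "nat \<Rightarrow> arr \<Rightarrow> vert" where
  "atgt n (X k) = Bd k"
| "atgt n Y4 = Bd 2"
| "atgt n Y2n = Bd (2*n - 2)"
| "atgt n (Al k) = (if k = n - 3 then Bd (2*n) else Iv (k + 1))"
| "atgt n (Be j) = Bd (2*j + 4)"
| "atgt n (Ga k) = Iv k"

fun valid_vert :: "nat \<Rightarrow> vert \<Rightarrow> bool" where
  "valid_vert n (Bd k) = (1 \<le> k \<and> k \<le> 2*n)"
| "valid_vert n (Iv k) = (1 \<le> k \<and> k \<le> n - 3)"

fun valid_arr :: "nat \<Rightarrow> arr \<Rightarrow> bool" where
  "valid_arr n (X k) = (1 \<le> k \<and> k \<le> 2*n)"
| "valid_arr n Y4 = True"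
| "valid_arr n Y2n = True"
| "valid_arr n (Al k) = (k \<le> n - 3)"
| "valid_arr n (Be j) = (j + 1 \<le> n - 3)"
| "valid_arr n (Ga k) = (1 \<le> k \<and> k \<le> n - 3)"

fun internal_arr :: "arr \<Rightarrow> bool" where
  "internal_arr (X k) = False"
| "internal_arr _ = True"

section \<open>Paths (composed left to right)\<close>

text \<open>A path is a start vertex together with a list of arrows; P v [] is the trivial path e_v.\<close>
datatype path = P vert "arr list"

fun composable :: "nat \<Rightarrow> arr list \<Rightarrow> bool" where
  "composable n [] = True"
| "composable n [a] = True"
| "composable n (a # b # as) = (atgt n a = asrc n b \<and> composable n (b # as))"

fun valid_path :: "nat \<Rightarrow> path \<Rightarrow> bool" where
  "valid_path n (P v as) = (valid_vert n v \<and> (\<forall>a\<in>set as. valid_arr n a) \<and> composable n as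
      \<and> (as \<noteq> [] \<longrightarrow> asrc n (hd as) = v))"

fun ptgt :: "nat \<Rightarrow> path \<Rightarrow> vert" where
  "ptgt n (P v as) = (if as = [] then v else atgt n (last as))"

fun pmult :: "nat \<Rightarrow> path \<Rightarrow> path \<Rightarrow> path option" where
  "pmult n (P v as) (P w bs) = (if ptgt n (P v as) = w then Some (P v (as @ bs)) else None)"

definition mkpath :: "nat \<Rightarrow> arr list \<Rightarrow> path" where
  "mkpath n as = P (asrc n (hd as)) as"

definition CQ :: "nat \<Rightarrow> (path \<Rightarrow> complex) set" where
  "CQ n = {f. finite {p. f p \<noteq> 0} \<and> (\<forall>p. f p \<noteq> 0 \<longrightarrow> valid_path n p)}"

definition pmul :: "nat \<Rightarrow> (path \<Rightarrow> complex) \<Rightarrow> (path \<Rightarrow> complex) \<Rightarrow> (path \<Rightarrow> complex)" where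
  "pmul n f g = (\<lambda>r. \<Sum>(p, q) \<in> {(p, q). pmult n p q = Some r}. f p * g q)"

definition basis :: "path \<Rightarrow> (path \<Rightarrow> complex)" where
  "basis p = (\<lambda>r. if r = p then 1 else 0)"

text \<open>z_{2k} as a list of arrows, for k in [1,n].\<close>
definition zpath :: "nat \<Rightarrow> nat \<Rightarrow> arr list" where
  "zpath n k = (if k = 1 then map Al [0..<n - 2]
               else if k = 2 then [Y4]
               else if k = n then [Y2n]
               else [Ga (k - 2), Be (k - 3)])"

text \<open>z_{2j} with j taken modulo n (representatives in [1,n]).\<close>
definition zz :: "nat \<Rightarrow> nat \<Rightarrow> arr list" where
  "zz n j = zpath n ((j + n - 1) mod n + 1)"

text \<open>The faces of Q_F(n), as cyclic words of arrows: the n faces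
  x_{2j-1} x_{2j} z_{2j} at the boundary and the n-2 triangles, one per triangle of the fan.\<close>
definition faces :: "nat \<Rightarrow> arr list list" where
  "faces n = map (\<lambda>j. [X (2*j - 1), X (2*j)] @ zpath n j) [1..<n + 1]
     @ [[Y4, Al 0, Be 0]]
     @ map (\<lambda>k. [Al (k - 1), Be (k - 1), Ga (k - 1)]) [2..<n - 2]
     @ [[Al (n - 3), Y2n, Ga (n - 3)]]"

text \<open>The relations p = q of \<partial>W: for an internal arrow a lying on two distinct faces
  a p and a q (up to cyclic rotation).\<close>
definition dW_rel :: "nat \<Rightarrow> arr list \<Rightarrow> arr list \<Rightarrow> bool" where
  "dW_rel n p q = (\<exists>a F1 F2 i j. internal_arr a \<and> F1 \<in> set (faces n) \<and> F2 \<in> set (faces n)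
      \<and> F1 \<noteq> F2 \<and> rotate i F1 = a # p \<and> rotate j F2 = a # q)"

inductive_set dW_ideal :: "nat \<Rightarrow> (path \<Rightarrow> complex) set" for n where
  gen: "dW_rel n p q \<Longrightarrow> (\<lambda>r. basis (mkpath n p) r - basis (mkpath n q) r) \<in> dW_ideal n"
| zero: "(\<lambda>r. 0) \<in> dW_ideal n"
| add: "f \<in> dW_ideal n \<Longrightarrow> g \<in> dW_ideal n \<Longrightarrow> (\<lambda>r. f r + g r) \<in> dW_ideal n"
| smult: "f \<in> dW_ideal n \<Longrightarrow> (\<lambda>r. c * f r) \<in> dW_ideal n"
| lmult: "f \<in> dW_ideal n \<Longrightarrow> g \<in> CQ n \<Longrightarrow> pmul n g f \<in> dW_ideal n"
| rmult: "f \<in> dW_ideal n \<Longrightarrow> g \<in> CQ n \<Longrightarrow> pmul n f g \<in> dW_ideal n"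

text \<open>Equality in the dimer algebra \<Lambda> = CQ / \<langle>\<partial>W\<rangle>.\<close>
definition lam_eq :: "nat \<Rightarrow> (path \<Rightarrow> complex) \<Rightarrow> (path \<Rightarrow> complex) \<Rightarrow> bool" where
  "lam_eq n f g = ((\<lambda>r. f r - g r) \<in> dW_ideal n)"

definition pel :: "nat \<Rightarrow> arr list \<Rightarrow> (path \<Rightarrow> complex)" where
  "pel n as = basis (mkpath n as)"

text \<open>x_j with j taken modulo 2n.\<close>
definition xx :: "nat \<Rightarrow> nat \<Rightarrow> arr" where
  "xx n j = X (bix n j)"

end

theory Submission imports Defs begin

lemma composable_Cons: "composable n (a # as) = ((as \<noteq> [] \<longrightarrow> atgt n a = asrc n (hd as)) \<and> composable n as)"
  by (cases as) auto

lemma composable_append: "composable n (as @ bs) = (composable n as \<and> composable n bs \<and> (as \<noteq> [] \<longrightarrow> bs \<noteq> [] \<longrightarrow> atgt n (last as) = asrc n (hd bs)))"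
  by (induction as) (auto simp: composable_Cons)

lemma upt_split: "a \<le> b \<Longrightarrow> b \<le> c \<Longrightarrow> [a..<c] = [a..<b] @ [b..<c]"
proof -
  assume "a \<le> b" "b \<le> c"
  then have "c = b + (c - b)" by simp
  then show ?thesis using upt_add_eq_append[of a b "c-b"] \<open>a \<le> b\<close> by metis
qed

definition vp :: "nat \<Rightarrow> arr list \<Rightarrow> bool" where
  "vp n as = ((\<forall>a\<in>set as. valid_arr n a) \<and> composable n as)"

lemma vp_append: "vp n (as @ bs) = (vp n as \<and> vp n bs \<and> (as \<noteq> [] \<longrightarrow> bs \<noteq> [] \<longrightarrow> atgt n (last as) = asrc n (hd bs)))"
  unfolding vp_def composable_append by auto

lemma vp_Cons: "vp n (a # as) = (valid_arr n a \<and> vp n as \<and> (as \<noteq> [] \<longrightarrow> atgt n a = asrc n (hd as)))"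
  unfolding vp_def composable_Cons by auto

lemma vp_Nil[simp]: "vp n []" by (simp add: vp_def)

lemma bix_id: "1 \<le> j \<Longrightarrow> j \<le> 2*n \<Longrightarrow> bix n j = j"
  unfolding bix_def
proof -
  assume "1 \<le> j" "j \<le> 2*n"
  then have "j + 2*n - 1 = (j - 1) + 2*n" by simp
  then have "(j + 2 * n - 1) mod (2 * n) = (j - 1) mod (2*n)" by (simp only: mod_add_self2)
  then show "(j + 2 * n - 1) mod (2 * n) + 1 = j" using \<open>1 \<le> j\<close> \<open>j \<le> 2*n\<close> by simp
qed

lemma bix_wrap: "2*n < j \<Longrightarrow> j \<le> 4*n \<Longrightarrow> bix n j = j - 2*n"
  unfolding bix_def
proof -
  assume a: "2*n < j" "j \<le> 4*n"
  then have "j + 2*n - 1 = (j - 2*n - 1) + 2*n + 2*n" by simp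
  then have "(j + 2 * n - 1) mod (2 * n) = (j - 2*n - 1) mod (2*n)" by (simp only: mod_add_self2)
  then show "(j + 2 * n - 1) mod (2 * n) + 1 = j - 2*n" using a by simp
qed

lemma vp_X: "1 \<le> a \<Longrightarrow> b \<le> 2*n+1 \<Longrightarrow> vp n (map X [a..<b])"
proof (induction b)
  case 0 then show ?case by simp
next
  case (Suc b)
  show ?case
  proof (cases "a \<le> b")
    case True
    have "vp n (map X [a..<b])" using Suc by simp
    moreover have "a < b \<Longrightarrow> bix n (b - 1) = b - 1" using Suc True by (intro bix_id) auto
    ultimately show ?thesis using True Suc.prems
      by (auto simp: vp_append vp_Cons last_map)
  next
    case False then show ?thesis by simp
  qed
qed

lemma vp_Al: "b + 2 \<le> n \<Longrightarrow> vp n (map Al [a..<b])"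
proof (induction b)
  case 0 then show ?case by simp
next
  case (Suc b)
  show ?case
  proof (cases "a \<le> b")
    case True
    have "vp n (map Al [a..<b])" using Suc by simp
    then show ?thesis using True Suc.prems
      by (auto simp: vp_append vp_Cons last_map)
  next
    case False then show ?thesis by simp
  qed
qed


lemma finite_pairs: "finite {(p, q). pmult n p q = Some r}"
proof -
  obtain v cs where r: "r = P v cs" by (cases r)
  have "{(p, q). pmult n p q = Some r} \<subseteq>
     (\<lambda>i. (P v (take i cs), P (ptgt n (P v (take i cs))) (drop i cs))) ` {..length cs}"
  proof
    fix x assume "x \<in> {(p, q). pmult n p q = Some r}"
    then obtain p q where x: "x = (p, q)" and pq: "pmult n p q = Some r" by auto
    obtain v' as where p: "p = P v' as" by (cases p)
    obtain w bs where q: "q = P w bs" by (cases q)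
    from pq have "ptgt n (P v' as) = w" "v' = v" "as @ bs = cs"
      by (auto simp: p q r split: if_splits)
    then show "x \<in> (\<lambda>i. (P v (take i cs), P (ptgt n (P v (take i cs))) (drop i cs))) ` {..length cs}"
      by (intro image_eqI[of _ _ "length as"]) (auto simp: x p q)
  qed
  then show ?thesis by (rule finite_subset) simp
qed

lemma pmul_basis: "pmult n a b = Some c \<Longrightarrow> pmul n (basis a) (basis b) = basis c"
proof
  fix r assume ab: "pmult n a b = Some c"
  have "pmul n (basis a) (basis b) r = (\<Sum>x\<in>{(p, q). pmult n p q = Some r}. if x = (a, b) then 1 else 0)"
    unfolding pmul_def by (rule sum.cong) (auto simp: basis_def split: if_splits)
  also have "\<dots> = (if (a, b) \<in> {(p, q). pmult n p q = Some r} then 1 else 0)"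
    using finite_pairs by (rule sum.delta)
  also have "\<dots> = basis c r" using ab by (auto simp: basis_def)
  finally show "pmul n (basis a) (basis b) r = basis c r" .
qed

lemma pmul_diff_right: "pmul n g (\<lambda>r. f1 r - f2 r) = (\<lambda>r. pmul n g f1 r - pmul n g f2 r)"
  unfolding pmul_def by (auto simp: split_def right_diff_distrib sum_subtractf)

lemma pmul_diff_left: "pmul n (\<lambda>r. f1 r - f2 r) g = (\<lambda>r. pmul n f1 g r - pmul n f2 g r)"
  unfolding pmul_def by (auto simp: split_def left_diff_distrib sum_subtractf)

lemma basis_CQ: "valid_path n p \<Longrightarrow> basis p \<in> CQ n"
  unfolding CQ_def basis_def by (auto simp: finite_subset[of _ "{p}"])

lemma lam_eq_trans: "lam_eq n f g \<Longrightarrow> lam_eq n g h \<Longrightarrow> lam_eq n f h"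
  unfolding lam_eq_def
proof -
  assume "(\<lambda>r. f r - g r) \<in> dW_ideal n" "(\<lambda>r. g r - h r) \<in> dW_ideal n"
  then have "(\<lambda>r. (f r - g r) + (g r - h r)) \<in> dW_ideal n" by (rule dW_ideal.add)
  then show "(\<lambda>r. f r - h r) \<in> dW_ideal n" by simp
qed

lemma lam_eq_sym: "lam_eq n f g \<Longrightarrow> lam_eq n g f"
  unfolding lam_eq_def
proof -
  assume "(\<lambda>r. f r - g r) \<in> dW_ideal n"
  then have "(\<lambda>r. (-1) * (f r - g r)) \<in> dW_ideal n" by (rule dW_ideal.smult)
  then show "(\<lambda>r. g r - f r) \<in> dW_ideal n" by simp
qed

context fixes n :: nat assumes n4: "4 \<le> n"
begin

lemma bix_range: "1 \<le> bix n j \<and> bix n j \<le> 2*n"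
proof -
  have "(j + 2 * n - 1) mod (2 * n) < 2*n" using n4 by simp
  then show ?thesis unfolding bix_def by simp
qed

lemma valid_src: "valid_arr n a \<Longrightarrow> valid_vert n (asrc n a)"
  using n4 bix_range by (cases a) auto

lemma pel_CQ: "as \<noteq> [] \<Longrightarrow> vp n as \<Longrightarrow> pel n as \<in> CQ n"
  unfolding pel_def mkpath_def
  by (rule basis_CQ) (auto simp: vp_def valid_src)

lemma lam_rmul:
  assumes "lam_eq n (pel n p) (pel n q)" "p \<noteq> []" "q \<noteq> []" "v \<noteq> []" "vp n v"
    "atgt n (last p) = asrc n (hd v)" "atgt n (last q) = asrc n (hd v)"
  shows "lam_eq n (pel n (p @ v)) (pel n (q @ v))"
proof -
  have "pmul n (\<lambda>r. pel n p r - pel n q r) (pel n v) \<in> dW_ideal n"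
    using assms(1) pel_CQ[OF assms(4,5)] unfolding lam_eq_def by (rule dW_ideal.rmult)
  moreover have "pmul n (pel n p) (pel n v) = pel n (p @ v)"
    unfolding pel_def mkpath_def using assms by (intro pmul_basis) simp
  moreover have "pmul n (pel n q) (pel n v) = pel n (q @ v)"
    unfolding pel_def mkpath_def using assms by (intro pmul_basis) simp
  ultimately show ?thesis unfolding lam_eq_def pmul_diff_left by simp
qed

lemma lam_lmul:
  assumes "lam_eq n (pel n p) (pel n q)" "p \<noteq> []" "q \<noteq> []" "u \<noteq> []" "vp n u"
    "atgt n (last u) = asrc n (hd p)" "atgt n (last u) = asrc n (hd q)"
  shows "lam_eq n (pel n (u @ p)) (pel n (u @ q))"
proof -
  have "pmul n (pel n u) (\<lambda>r. pel n p r - pel n q r) \<in> dW_ideal n"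
    using assms(1) pel_CQ[OF assms(4,5)] unfolding lam_eq_def by (rule dW_ideal.lmult)
  moreover have "pmul n (pel n u) (pel n p) = pel n (u @ p)"
    unfolding pel_def mkpath_def using assms by (intro pmul_basis) simp
  moreover have "pmul n (pel n u) (pel n q) = pel n (u @ q)"
    unfolding pel_def mkpath_def using assms by (intro pmul_basis) simp
  ultimately show ?thesis unfolding lam_eq_def pmul_diff_right by simp
qed

definition eqv where
  "eqv p q = (p \<noteq> [] \<and> q \<noteq> [] \<and> vp n p \<and> vp n q \<and> asrc n (hd p) = asrc n (hd q)
     \<and> atgt n (last p) = atgt n (last q) \<and> lam_eq n (pel n p) (pel n q))"

lemma eqv_sym: "eqv p q \<Longrightarrow> eqv q p"
  unfolding eqv_def using lam_eq_sym by metis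

lemma eqv_trans: "eqv p q \<Longrightarrow> eqv q r \<Longrightarrow> eqv p r"
  unfolding eqv_def using lam_eq_trans by metis

lemma eqv_ctx: assumes "eqv p q" "vp n (u @ p @ v)" shows "eqv (u @ p @ v) (u @ q @ v)"
proof -
  have e: "p \<noteq> []" "q \<noteq> []" "vp n p" "vp n q" "asrc n (hd p) = asrc n (hd q)"
     "atgt n (last p) = atgt n (last q)" "lam_eq n (pel n p) (pel n q)"
    using assms(1) unfolding eqv_def by auto
  have vu: "vp n u" "vp n v" "u \<noteq> [] \<longrightarrow> atgt n (last u) = asrc n (hd p)"
     "v \<noteq> [] \<longrightarrow> atgt n (last p) = asrc n (hd v)"
    using assms(2) e(1) by (auto simp: vp_append)
  have vq: "vp n (u @ q @ v)" using vu e by (auto simp: vp_append)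
  have l1: "lam_eq n (pel n (p @ v)) (pel n (q @ v))"
    using e vu by (cases "v = []") (auto intro: lam_rmul)
  have l2: "lam_eq n (pel n (u @ p @ v)) (pel n (u @ q @ v))"
    using l1 e vu by (cases "u = []") (auto intro!: lam_lmul)
  show ?thesis unfolding eqv_def using l2 e vq assms(2) by (auto simp: hd_append last_append)
qed

lemma eqv_rel: "dW_rel n p q \<Longrightarrow> p \<noteq> [] \<Longrightarrow> q \<noteq> [] \<Longrightarrow> vp n p \<Longrightarrow> vp n q \<Longrightarrow>
   asrc n (hd p) = asrc n (hd q) \<Longrightarrow> atgt n (last p) = atgt n (last q) \<Longrightarrow> eqv p q"
  unfolding eqv_def lam_eq_def pel_def by (auto intro: dW_ideal.gen)


lemma dW_intro: "internal_arr a \<Longrightarrow> F1 \<in> set (faces n) \<Longrightarrow> F2 \<in> set (faces n) \<Longrightarrow> F1 \<noteq> F2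
   \<Longrightarrow> rotate i F1 = a # p \<Longrightarrow> rotate j F2 = a # q \<Longrightarrow> dW_rel n p q"
  unfolding dW_rel_def by blast

lemma face_B: "1 \<le> j \<Longrightarrow> j \<le> n \<Longrightarrow> [X (2*j-1), X (2*j)] @ zpath n j \<in> set (faces n)"
  unfolding faces_def set_append set_map by (intro UnI1 image_eqI[of _ _ j]) auto

lemma face_T1: "[Y4, Al 0, Be 0] \<in> set (faces n)"
  unfolding faces_def by auto

lemma face_Tk: "1 \<le> k \<Longrightarrow> k + 4 \<le> n \<Longrightarrow> [Al k, Be k, Ga k] \<in> set (faces n)"
  unfolding faces_def by (auto intro!: image_eqI[of _ _ "k+1"])

lemma face_TL: "[Al (n-3), Y2n, Ga (n-3)] \<in> set (faces n)"
  unfolding faces_def by auto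

lemma rot: "rotate (length l) (l @ q) = q @ l" by (rule rotate_append)

lemma E_Y4: "eqv [X 3, X 4] [Al 0, Be 0]"
proof -
  have F: "[X 3, X 4] @ [Y4] \<in> set (faces n)" using face_B[of 2] n4 by (simp add: zpath_def)
  have "dW_rel n [X 3, X 4] [Al 0, Be 0]"
    by (rule dW_intro[OF _ F face_T1, where a=Y4 and i=2 and j=0]) (auto simp: numeral_eq_Suc)
  then show ?thesis using n4 by (intro eqv_rel) (auto simp: vp_Cons bix_id)
qed


lemma E_Y2n: "eqv [X (2*n-1), X (2*n)] [Ga (n-3), Al (n-3)]"
proof -
  have F: "[X (2*n-1), X (2*n)] @ [Y2n] \<in> set (faces n)" using face_B[of n] n4 by (simp add: zpath_def)
  have "dW_rel n [X (2*n-1), X (2*n)] [Ga (n-3), Al (n-3)]"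
    by (rule dW_intro[OF _ F face_TL, where a=Y2n and i=2 and j=1]) (auto simp: numeral_eq_Suc)
  then show ?thesis using n4 by (intro eqv_rel) (auto simp: vp_Cons bix_id)
qed

lemma B1_split: "k \<le> n - 3 \<Longrightarrow> [X 1, X 2] @ zpath n 1 = ([X 1, X 2] @ map Al [0..<k]) @ (Al k # map Al [k+1..<n-2])"
proof -
  assume k: "k \<le> n - 3"
  have "[0..<n-2] = [0..<k] @ [k..<n-2]" using upt_split[of 0 k "n-2"] k by simp
  also have "[k..<n-2] = k # [k+1..<n-2]" using k n4 by (simp add: upt_conv_Cons)
  finally show ?thesis by (simp add: zpath_def)
qed

lemma F_B1: "[X 1, X 2] @ zpath n 1 \<in> set (faces n)" using face_B[of 1] n4 by simp

lemma rotB1: "k \<le> n - 3 \<Longrightarrow> rotate (k+2) ([X 1, X 2] @ zpath n 1) = Al k # (map Al [k+1..<n-2] @ [X 1, X 2] @ map Al [0..<k])"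
  using B1_split rot[of "[X 1, X 2] @ map Al [0..<k]"] by simp

lemma vp_B1tail: "k \<le> n - 3 \<Longrightarrow> vp n (map Al [k+1..<n-2] @ [X 1, X 2] @ map Al [0..<k])"
  using n4 vp_Al[where b="n-2" and a="k+1" and n=n] vp_Al[where b=k and a=0 and n=n]
  by (auto simp: vp_append vp_Cons bix_def last_map hd_map)

lemma E_Al0: "eqv (map Al [1..<n-2] @ [X 1, X 2]) [Be 0, Y4]"
proof -
  have "dW_rel n (map Al [0+1..<n-2] @ [X 1, X 2] @ map Al [0..<0]) [Be 0, Y4]"
    by (rule dW_intro[OF _ F_B1 face_T1, where a="Al 0" and i=2 and j=1])
       (use rotB1[of 0] n4 in \<open>auto simp: numeral_eq_Suc faces_def\<close>)
  then show ?thesis using n4 vp_B1tail[of 0] by (intro eqv_rel) (auto simp: vp_Cons hd_map)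
qed


lemma E_Alk: assumes k: "1 \<le> k" "k + 4 \<le> n"
  shows "eqv (map Al [k+1..<n-2] @ [X 1, X 2] @ map Al [0..<k]) [Be k, Ga k]"
proof -
  have "dW_rel n (map Al [k+1..<n-2] @ [X 1, X 2] @ map Al [0..<k]) [Be k, Ga k]"
    by (rule dW_intro[OF _ F_B1 face_Tk[OF k], where a="Al k" and i="k+2" and j=0])
       (use rotB1[of k] k in \<open>auto simp: zpath_def\<close>)
  then show ?thesis using k vp_B1tail[of k] by (intro eqv_rel) (auto simp: vp_Cons hd_map last_map)
qed

lemma E_AlL: "eqv ([X 1, X 2] @ map Al [0..<n-3]) [Y2n, Ga (n-3)]"
proof -
  have "dW_rel n (map Al [n-3+1..<n-2] @ [X 1, X 2] @ map Al [0..<n-3]) [Y2n, Ga (n-3)]"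
    by (rule dW_intro[OF _ F_B1 face_TL, where a="Al (n-3)" and i="n-3+2" and j=0])
       (use rotB1[of "n-3"] n4 in \<open>auto simp: zpath_def\<close>)
  moreover have "n - 3 + 1 = n - 2" using n4 by simp
  ultimately have "dW_rel n ([X 1, X 2] @ map Al [0..<n-3]) [Y2n, Ga (n-3)]" by simp
  then show ?thesis using n4 vp_B1tail[of "n-3"]
    by (intro eqv_rel) (auto simp: vp_Cons hd_map last_map bix_def)
qed

lemma E_Be0: "eqv [X 5, X 6, Ga 1] [Y4, Al 0]"
proof -
  have F: "[X 5, X 6, Ga 1, Be 0] \<in> set (faces n)" using face_B[of 3] n4 by (simp add: zpath_def)
  have "dW_rel n [X 5, X 6, Ga 1] [Y4, Al 0]"
    by (rule dW_intro[OF _ F face_T1, where a="Be 0" and i=3 and j=2]) (auto simp: numeral_eq_Suc)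
  then show ?thesis using n4 by (intro eqv_rel) (auto simp: vp_Cons bix_id)
qed

lemma E_Bej: assumes j: "1 \<le> j" "j + 4 \<le> n"
  shows "eqv [X (2*j+5), X (2*j+6), Ga (j+1)] [Ga j, Al j]"
proof -
  have F: "[X (2*j+5), X (2*j+6), Ga (j+1), Be j] \<in> set (faces n)"
  proof -
    have e: "[X (2*(j+3)-1), X (2*(j+3))] @ zpath n (j+3) = [X (2*j+5), X (2*j+6), Ga (j+1), Be j]"
      using j by (simp add: zpath_def)
    show ?thesis using face_B[of "j+3", unfolded e] j by simp
  qed
  have "dW_rel n [X (2*j+5), X (2*j+6), Ga (j+1)] [Ga j, Al j]"
    by (rule dW_intro[OF _ F face_Tk[OF j], where a="Be j" and i=3 and j=1]) (auto simp: numeral_eq_Suc)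
  then show ?thesis using j by (intro eqv_rel) (auto simp: vp_Cons bix_id)
qed

lemma E_Gak: assumes k: "1 \<le> k" "k + 4 \<le> n"
  shows "eqv [Be (k-1), X (2*k+3), X (2*k+4)] [Al k, Be k]"
proof -
  have F: "[X (2*k+3), X (2*k+4), Ga k, Be (k-1)] \<in> set (faces n)"
  proof -
    have e: "[X (2*(k+2)-1), X (2*(k+2))] @ zpath n (k+2) = [X (2*k+3), X (2*k+4), Ga k, Be (k-1)]"
      using k by (simp add: zpath_def)
    show ?thesis using face_B[of "k+2", unfolded e] k by simp
  qed
  have "dW_rel n [Be (k-1), X (2*k+3), X (2*k+4)] [Al k, Be k]"
    by (rule dW_intro[OF _ F face_Tk[OF k], where a="Ga k" and i=2 and j=2]) (auto simp: numeral_eq_Suc)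
  then show ?thesis using k by (intro eqv_rel) (auto simp: vp_Cons bix_id)
qed

lemma E_GaL: "eqv [Be (n-4), X (2*n-3), X (2*n-2)] [Al (n-3), Y2n]"
proof -
  have F: "[X (2*n-3), X (2*n-2), Ga (n-3), Be (n-4)] \<in> set (faces n)"
  proof -
    have e: "[X (2*(n-1)-1), X (2*(n-1))] @ zpath n (n-1) = [X (2*n-3), X (2*n-2), Ga (n-3), Be (n-4)]"
      using n4 by (simp add: zpath_def, arith)
    show ?thesis using face_B[of "n-1", unfolded e] n4 by simp
  qed
  have "dW_rel n [Be (n-4), X (2*n-3), X (2*n-2)] [Al (n-3), Y2n]"
    by (rule dW_intro[OF _ F face_TL, where a="Ga (n-3)" and i=2 and j=2]) (auto simp: numeral_eq_Suc)
  then show ?thesis using n4 by (intro eqv_rel) (auto simp: vp_Cons bix_id)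
qed


lemma eqv_ctx': "eqv p q \<Longrightarrow> A = u @ p @ v \<Longrightarrow> B = u @ q @ v \<Longrightarrow> vp n A \<Longrightarrow> eqv A B"
  using eqv_ctx by blast

lemmas eqv_tr[trans] = eqv_trans

lemma C1: "1 \<le> a \<Longrightarrow> a + 3 \<le> n \<Longrightarrow> eqv (Ga a # map Al [a..<n-2]) (map X [2*a+5..<2*n+1])"
proof (induction "n-3-a" arbitrary: a)
  case 0
  then have a: "a = n - 3" by simp
  have "[a..<n-2] = [n-3]" using a n4 by (simp add: upt_conv_Cons)
  moreover have "2*a+5 = 2*n-1" "2*n+1 = Suc (Suc (2*n-1))" using a n4 by auto
  then have "[2*a+5..<2*n+1] = [2*n-1, 2*n]" using n4 by (simp add: upt_conv_Cons)
  ultimately show ?case using eqv_sym[OF E_Y2n] a by simp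
next
  case (Suc d)
  have a: "1 \<le> a" "a + 4 \<le> n" using Suc by auto
  have "eqv (Ga a # map Al [a..<n-2]) ([X (2*a+5), X (2*a+6), Ga (a+1)] @ map Al [a+1..<n-2])"
    by (rule eqv_ctx'[OF eqv_sym[OF E_Bej[OF a]], where u="[]" and v="map Al [a+1..<n-2]"])
       (use a vp_Al[where n=n and a="a+1" and b="n-2"] in \<open>auto simp: upt_conv_Cons vp_Cons hd_map\<close>)
  also have "eqv \<dots> ([X (2*a+5), X (2*a+6)] @ map X [2*(a+1)+5..<2*n+1])"
    by (rule eqv_ctx'[OF Suc.hyps(1)[of "a+1"], where u="[X (2*a+5), X (2*a+6)]" and v="[]"])
       (use a Suc.hyps(2) vp_Al[where n=n and a="a+1" and b="n-2"] in \<open>auto simp: upt_conv_Cons vp_Cons hd_map bix_id\<close>)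
  also have "[X (2*a+5), X (2*a+6)] @ map X [2*(a+1)+5..<2*n+1] = map X [2*a+5..<2*n+1]"
    using a by (simp add: upt_conv_Cons)
  finally show ?case .
qed

lemma C2: "m + 4 \<le> n \<Longrightarrow> eqv (map Al [0..<m+1] @ [Be m]) (map X [3..<2*m+5])"
proof (induction m)
  case 0
  then show ?case using eqv_sym[OF E_Y4] by (simp add: upt_conv_Cons)
next
  case (Suc m)
  have k: "1 \<le> m + 1" "m + 1 + 4 \<le> n" using Suc by auto
  have "map Al [0..<Suc m+1] @ [Be (Suc m)] = map Al [0..<m+1] @ [Al (m+1), Be (m+1)]" by simp
  also have "eqv \<dots> (map Al [0..<m+1] @ [Be m, X (2*m+5), X (2*m+6)])"
    by (rule eqv_ctx'[OF eqv_sym[OF E_Gak[OF k]], where u="map Al [0..<m+1]" and v="[]"])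
       (use k vp_Al[where n=n and a=0 and b="m+1"] in \<open>auto simp: vp_Cons vp_append last_map\<close>)
  also have "map Al [0..<m+1] @ [Be m, X (2*m+5), X (2*m+6)] = (map Al [0..<m+1] @ [Be m]) @ [X (2*m+5), X (2*m+6)]"
    by simp
  also have "eqv \<dots> (map X [3..<2*m+5] @ [X (2*m+5), X (2*m+6)])"
    by (rule eqv_ctx'[OF Suc.IH, where u="[]" and v="[X (2*m+5), X (2*m+6)]"])
       (use k vp_Al[where n=n and a=0 and b="m+1"] in \<open>auto simp: vp_Cons vp_append last_map bix_id\<close>)
  also have "map X [3..<2*m+5] @ [X (2*m+5), X (2*m+6)] = map X [3..<2*Suc m+5]"
  proof -
    have "[3..<2*Suc m+5] = [3..<2*m+5] @ [2*m+5..<2*m+7]" using upt_split[of 3 "2*m+5" "2*m+7"] by (simp add: add.commute)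
    then show ?thesis by (simp add: upt_conv_Cons)
  qed
  finally show ?case .
qed


lemma bix0: "bix n 0 = 2*n"
  using n4 unfolding bix_def by simp

lemma hd_Al: "hd (map Al [0..<m] @ Al m # r) = Al 0"
  by (cases m) (simp_all add: hd_map upt_conv_Cons del: upt_Suc)

lemmas vps = vp_append vp_Cons hd_map last_map bix_id vp_Al vp_X bix0 hd_Al

lemma I1: "eqv (map Al [0..<n-2] @ [Y2n]) (map X [3..<2*n-1])"
proof -
  have e1: "[0..<n-2] = [0..<n-3] @ [n-3]" using n4 upt_split[of 0 "n-3" "n-2"] by (simp add: upt_conv_Cons)
  have "eqv (map Al [0..<n-2] @ [Y2n]) (map Al [0..<n-3] @ [Be (n-4), X (2*n-3), X (2*n-2)])"
    by (rule eqv_ctx'[OF eqv_sym[OF E_GaL], where u="map Al [0..<n-3]" and v="[]"])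
       (use n4 e1 in \<open>auto simp: vps\<close>)
  also have "eqv \<dots> (map X [3..<2*(n-4)+5] @ [X (2*n-3), X (2*n-2)])"
    by (rule eqv_ctx'[OF C2[of "n-4"], where u="[]" and v="[X (2*n-3), X (2*n-2)]"])
       (use n4 upt_Suc[of 0 "n-4"] in \<open>auto simp: vps Suc_diff_Suc numeral_eq_Suc\<close>)
  also have "map X [3..<2*(n-4)+5] @ [X (2*n-3), X (2*n-2)] = map X [3..<2*n-1]"
  proof -
    have "[3..<2*n-1] = [3..<2*(n-4)+5] @ [2*(n-4)+5..<2*n-1]" using n4 upt_split[of 3 "2*(n-4)+5" "2*n-1"] by simp
    moreover have "[2*(n-4)+5..<2*n-1] = [2*n-3, 2*n-2]" using n4 by (simp add: upt_conv_Cons, arith)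
    ultimately show ?thesis using n4 by simp
  qed
  finally show ?thesis .
qed


lemma I2: "eqv ([Y4] @ map Al [0..<n-2]) (map X [5..<2*n+1])"
proof -
  have e1: "[0..<n-2] = 0 # [1..<n-2]" using n4 by (simp add: upt_conv_Cons)
  have "eqv ([Y4] @ map Al [0..<n-2]) ([X 5, X 6, Ga 1] @ map Al [1..<n-2])"
    by (rule eqv_ctx'[OF eqv_sym[OF E_Be0], where u="[]" and v="map Al [1..<n-2]"])
       (use n4 e1 in \<open>auto simp: vps\<close>)
  also have "eqv \<dots> ([X 5, X 6] @ map X [2*1+5..<2*n+1])"
    by (rule eqv_ctx'[OF C1[of 1], where u="[X 5, X 6]" and v="[]"])
       (use n4 in \<open>auto simp: vps\<close>)
  also have "[X 5, X 6] @ map X [2*1+5..<2*n+1] = map X [5..<2*n+1]"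
    using n4 by (simp add: upt_conv_Cons)
  finally show ?thesis .
qed

lemma I3: "eqv [Ga 1, Be 0, Y4] (map X [7..<2*n+1] @ [X 1, X 2])"
proof -
  have "eqv [Ga 1, Be 0, Y4] ([Ga 1] @ map Al [1..<n-2] @ [X 1, X 2])"
    by (rule eqv_ctx'[OF eqv_sym[OF E_Al0], where u="[Ga 1]" and v="[]"])
       (use n4 in \<open>auto simp: vps\<close>)
  also have "eqv \<dots> (map X [2*1+5..<2*n+1] @ [X 1, X 2])"
    by (rule eqv_ctx'[OF C1[of 1], where u="[]" and v="[X 1, X 2]"])
       (use n4 in \<open>auto simp: vps\<close>)
  finally show ?thesis by simp
qed

lemma I4: assumes k: "4 \<le> k" "k + 1 \<le> n"
  shows "eqv [Ga (k-2), Be (k-3), Ga (k-3), Be (k-4)] (map X [2*k+1..<2*n+1] @ map X [1..<2*k-3])"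
proof -
  have k3: "1 \<le> k - 3" "k - 3 + 4 \<le> n" using k by auto
  have e1: "k - 3 + 1 = k - 2" using k by simp
  have "eqv [Ga (k-2), Be (k-3), Ga (k-3), Be (k-4)]
      ([Ga (k-2)] @ (map Al [k-3+1..<n-2] @ [X 1, X 2] @ map Al [0..<k-3]) @ [Be (k-4)])"
    by (rule eqv_ctx'[OF eqv_sym[OF E_Alk[OF k3]], where u="[Ga (k-2)]" and v="[Be (k-4)]"])
       (use k upt_Suc[of 0 "k-4"] in \<open>auto simp: vps Suc_diff_Suc numeral_eq_Suc\<close>)
  also have "[Ga (k-2)] @ (map Al [k-3+1..<n-2] @ [X 1, X 2] @ map Al [0..<k-3]) @ [Be (k-4)]
     = (Ga (k-2) # map Al [k-2..<n-2]) @ ([X 1, X 2] @ map Al [0..<k-3] @ [Be (k-4)])"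
    using e1 by simp
  also have "eqv \<dots> (map X [2*(k-2)+5..<2*n+1] @ ([X 1, X 2] @ map Al [0..<k-3] @ [Be (k-4)]))"
    by (rule eqv_ctx'[OF C1[of "k-2"], where u="[]" and v="[X 1, X 2] @ map Al [0..<k-3] @ [Be (k-4)]"])
       (use k upt_Suc[of 0 "k-4"] in \<open>auto simp: vps Suc_diff_Suc numeral_eq_Suc\<close>)
  also have "eqv \<dots> ((map X [2*(k-2)+5..<2*n+1] @ [X 1, X 2]) @ map X [3..<2*(k-4)+5])"
    by (rule eqv_ctx'[OF C2[of "k-4"], where u="map X [2*(k-2)+5..<2*n+1] @ [X 1, X 2]" and v="[]"])
       (use k upt_Suc[of 0 "k-4"] in \<open>auto simp: vps Suc_diff_Suc numeral_eq_Suc\<close>)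
  also have "(map X [2*(k-2)+5..<2*n+1] @ [X 1, X 2]) @ map X [3..<2*(k-4)+5] = map X [2*k+1..<2*n+1] @ map X [1..<2*k-3]"
  proof -
    have b: "2*(k-4)+5 = 2*k-3" using k by simp
    have "[1..<2*k-3] = [1, 2] @ [3..<2*(k-4)+5]" unfolding b
      using k upt_conv_Cons[of 1 "2*k-3"] upt_conv_Cons[of 2 "2*k-3"] by (simp add: numeral_2_eq_2 numeral_3_eq_3)
    moreover have b2: "2*(k-2)+5 = 2*k+1" using k by simp
    ultimately show ?thesis unfolding b2 by simp
  qed
  finally show ?thesis .
qed

lemma In: "eqv [Y2n, Ga (n-3), Be (n-4)] (map X [1..<2*n-3])"
proof -
  have "eqv [Y2n, Ga (n-3), Be (n-4)] (([X 1, X 2] @ map Al [0..<n-3]) @ [Be (n-4)])"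
    by (rule eqv_ctx'[OF eqv_sym[OF E_AlL], where u="[]" and v="[Be (n-4)]"])
       (use n4 upt_Suc[of 0 "n-4"] in \<open>auto simp: vps Suc_diff_Suc numeral_eq_Suc\<close>)
  also have "eqv \<dots> ([X 1, X 2] @ map X [3..<2*(n-4)+5])"
    by (rule eqv_ctx'[OF C2[of "n-4"], where u="[X 1, X 2]" and v="[]"])
       (use n4 upt_Suc[of 0 "n-4"] in \<open>auto simp: vps Suc_diff_Suc numeral_eq_Suc\<close>)
  also have "[X 1, X 2] @ map X [3..<2*(n-4)+5] = map X [1..<2*n-3]"
  proof -
    have b: "2*(n-4)+5 = 2*n-3" using n4 by simp
    have "[1..<2*n-3] = [1, 2] @ [3..<2*(n-4)+5]" unfolding b
      using n4 upt_conv_Cons[of 1 "2*n-3"] upt_conv_Cons[of 2 "2*n-3"] by (simp add: numeral_2_eq_2 numeral_3_eq_3)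
    then show ?thesis by simp
  qed
  finally show ?thesis .
qed


lemma II1: "eqv ([X 3, X 4] @ [Y4]) (map Al [0..<n-2] @ [X 1, X 2])"
proof -
  have e1: "[0..<n-2] = 0 # [1..<n-2]" using n4 by (simp add: upt_conv_Cons)
  have "eqv ([X 3, X 4] @ [Y4]) ([Al 0, Be 0] @ [Y4])"
    by (rule eqv_ctx'[OF E_Y4, where u="[]" and v="[Y4]"]) (use n4 in \<open>auto simp: vps\<close>)
  also have "eqv \<dots> ([Al 0] @ (map Al [1..<n-2] @ [X 1, X 2]))"
    by (rule eqv_ctx'[OF eqv_sym[OF E_Al0], where u="[Al 0]" and v="[]"]) (use n4 in \<open>auto simp: vps\<close>)
  finally show ?thesis using e1 by simp
qed

lemma II2: "eqv ([X 5, X 6] @ [Ga 1, Be 0]) ([Y4] @ [X 3, X 4])"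
proof -
  have "eqv ([X 5, X 6] @ [Ga 1, Be 0]) ([Y4, Al 0] @ [Be 0])"
    by (rule eqv_ctx'[OF E_Be0, where u="[]" and v="[Be 0]"]) (use n4 in \<open>auto simp: vps\<close>)
  also have "eqv \<dots> ([Y4] @ [X 3, X 4])"
    by (rule eqv_ctx'[OF eqv_sym[OF E_Y4], where u="[Y4]" and v="[]"]) (use n4 in \<open>auto simp: vps\<close>)
  finally show ?thesis .
qed

lemma IIk: assumes k: "3 \<le> k" "k + 2 \<le> n"
  shows "eqv ([X (2*k+1), X (2*k+2)] @ [Ga (k-1), Be (k-2)]) ([Ga (k-2), Be (k-3)] @ [X (2*k-1), X (2*k)])"
proof -
  have j: "1 \<le> k - 2" "k - 2 + 4 \<le> n" using k by auto
  have "eqv ([X (2*k+1), X (2*k+2)] @ [Ga (k-1), Be (k-2)]) ([Ga (k-2), Al (k-2)] @ [Be (k-2)])"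
    by (rule eqv_ctx'[OF E_Bej[OF j], where u="[]" and v="[Be (k-2)]"])
       (use k in \<open>auto simp: vps numeral_eq_Suc Suc_diff_Suc\<close>)
  also have "eqv \<dots> ([Ga (k-2), Be (k-3)] @ [X (2*k-1), X (2*k)])"
    by (rule eqv_ctx'[OF eqv_sym[OF E_Gak[OF j]], where u="[Ga (k-2)]" and v="[]"])
       (use k in \<open>auto simp: vps numeral_eq_Suc Suc_diff_Suc\<close>)
  finally show ?thesis .
qed

lemma IIn1: "eqv ([X (2*n-1), X (2*n)] @ [Y2n]) ([Ga (n-3), Be (n-4)] @ [X (2*n-3), X (2*n-2)])"
proof -
  have "eqv ([X (2*n-1), X (2*n)] @ [Y2n]) ([Ga (n-3), Al (n-3)] @ [Y2n])"
    by (rule eqv_ctx'[OF E_Y2n, where u="[]" and v="[Y2n]"]) (use n4 in \<open>auto simp: vps\<close>)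
  also have "eqv \<dots> ([Ga (n-3), Be (n-4)] @ [X (2*n-3), X (2*n-2)])"
    by (rule eqv_ctx'[OF eqv_sym[OF E_GaL], where u="[Ga (n-3)]" and v="[]"]) (use n4 in \<open>auto simp: vps\<close>)
  finally show ?thesis .
qed

lemma IIn: "eqv ([X 1, X 2] @ map Al [0..<n-2]) ([Y2n] @ [X (2*n-1), X (2*n)])"
proof -
  have e1: "[0..<n-2] = [0..<n-3] @ [n-3]" using n4 upt_split[of 0 "n-3" "n-2"] by (simp add: upt_conv_Cons)
  have "eqv (([X 1, X 2] @ map Al [0..<n-3]) @ [Al (n-3)]) ([Y2n, Ga (n-3)] @ [Al (n-3)])"
    by (rule eqv_ctx'[OF E_AlL, where u="[]" and v="[Al (n-3)]"])
       (use n4 upt_Suc[of 0 "n-4"] in \<open>auto simp: vps Suc_diff_Suc numeral_eq_Suc\<close>)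
  also have "eqv \<dots> ([Y2n] @ [X (2*n-1), X (2*n)])"
    by (rule eqv_ctx'[OF eqv_sym[OF E_Y2n], where u="[Y2n]" and v="[]"]) (use n4 in \<open>auto simp: vps\<close>)
  finally show ?thesis using e1 by simp
qed


lemma eqv_lam: "eqv p q \<Longrightarrow> lam_eq n (pel n p) (pel n q)"
  unfolding eqv_def by simp

lemma xx_id: "1 \<le> a \<Longrightarrow> b \<le> 2*n+1 \<Longrightarrow> map (xx n) [a..<b] = map X [a..<b]"
  by (auto simp: xx_def bix_id)

lemma xx_wrap: "2*n+1 \<le> a \<Longrightarrow> b \<le> 4*n+1 \<Longrightarrow> map (xx n) [a..<b] = map X [a-2*n..<b-2*n]"
proof (rule nth_equalityI)
  assume ab: "2*n+1 \<le> a" "b \<le> 4*n+1"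
  show "length (map (xx n) [a..<b]) = length (map X [a-2*n..<b-2*n])" using ab by simp
  fix i assume "i < length (map (xx n) [a..<b])"
  then have i: "a + i < b" by simp
  then show "map (xx n) [a..<b] ! i = map X [a-2*n..<b-2*n] ! i"
    using ab by (simp add: xx_def bix_wrap)
qed

lemma zz_in: "1 \<le> k \<Longrightarrow> k \<le> n \<Longrightarrow> zz n k = zpath n k"
proof -
  assume k: "1 \<le> k" "k \<le> n"
  then have "k + n - 1 = (k - 1) + n" by simp
  then have "(k + n - 1) mod n = (k - 1) mod n" by (simp only: mod_add_self2)
  then show ?thesis using k by (simp add: zz_def)
qed

lemma zz0: "zz n 0 = zpath n n"
  using n4 by (simp add: zz_def)

lemma zzS: "zz n (Suc n) = zpath n 1"
  using n4 by (simp add: zz_def)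

lemma partI: assumes k: "1 \<le> k" "k \<le> n"
  shows "lam_eq n (pel n (zz n k @ zz n (k - 1))) (pel n (map (xx n) [2*k + 1..<2*k + 2*(n - 2) + 1]))"
proof -
  consider "k = 1" | "k = 2" | "k = 3" | "4 \<le> k \<and> k + 1 \<le> n" | "k = n" using k by linarith
  then show ?thesis
  proof cases
    case 1
    have b: "2*k + 1 = 3" "2*k + 2*(n - 2) + 1 = 2*n-1" using 1 n4 by auto
    have "map (xx n) [2*k + 1..<2*k + 2*(n - 2) + 1] = map X [3..<2*n-1]"
      unfolding b using n4 by (intro xx_id) auto
    moreover have "zz n k @ zz n (k - 1) = map Al [0..<n-2] @ [Y2n]"
      using 1 n4 by (simp add: zz0 zz_in zpath_def)
    ultimately show ?thesis using eqv_lam[OF I1] by metis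
  next
    case 2
    have "map (xx n) [2*k + 1..<2*k + 2*(n - 2) + 1] = map X [5..<2*n+1]"
      using 2 n4 xx_id[of 5 "2*n+1"] by (simp add: algebra_simps)
    moreover have "zz n k @ zz n (k - 1) = [Y4] @ map Al [0..<n-2]"
      using 2 n4 by (simp add: zz_in zpath_def)
    ultimately show ?thesis using eqv_lam[OF I2] by metis
  next
    case 3
    have b: "2*k+1 = 7" "2*k + 2*(n - 2) + 1 = 2*n+3" using 3 n4 by auto
    have "[2*k + 1..<2*k + 2*(n - 2) + 1] = [7..<2*n+1] @ [2*n+1..<2*n+3]"
      unfolding b using n4 by (intro upt_split) auto
    moreover have "map (xx n) [2*n+1..<2*n+3] = [X 1, X 2]"
      using xx_wrap[of "2*n+1" "2*n+3"] n4 by (simp add: upt_conv_Cons)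
    ultimately have "map (xx n) [2*k + 1..<2*k + 2*(n - 2) + 1] = map X [7..<2*n+1] @ [X 1, X 2]"
      using xx_id[of 7 "2*n+1"] by simp
    moreover have "zz n k @ zz n (k - 1) = [Ga 1, Be 0, Y4]"
      using 3 n4 by (simp add: zz_in zpath_def)
    ultimately show ?thesis using eqv_lam[OF I3] by metis
  next
    case 4
    have b: "2*k + 2*(n - 2) + 1 = 2*k+2*n-3" using 4 n4 by auto
    have "[2*k + 1..<2*k + 2*(n - 2) + 1] = [2*k+1..<2*n+1] @ [2*n+1..<2*k+2*n-3]"
      unfolding b using 4 n4 by (intro upt_split) auto
    moreover have "map (xx n) [2*n+1..<2*k+2*n-3] = map X [1..<2*k-3]"
    proof -
      have "map (xx n) [2*n+1..<2*k+2*n-3] = map X [2*n+1-2*n..<2*k+2*n-3-2*n]"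
        using 4 by (intro xx_wrap) auto
      also have "2*k+2*n-3-2*n = 2*k-3" using 4 by auto
      finally show ?thesis by simp
    qed
    ultimately have "map (xx n) [2*k + 1..<2*k + 2*(n - 2) + 1] = map X [2*k+1..<2*n+1] @ map X [1..<2*k-3]"
      using xx_id[of "2*k+1" "2*n+1"] by simp
    moreover have "zz n k @ zz n (k - 1) = [Ga (k-2), Be (k-3), Ga (k-3), Be (k-4)]"
    proof -
      have kk: "4 \<le> k" "k + 1 \<le> n" using 4 by auto
      have c: "k - 1 \<noteq> 1" "k - 1 \<noteq> 2" "k - 1 \<noteq> n" "k - 1 - 2 = k - 3" "k - 1 - 3 = k - 4"
        "1 \<le> k - 1" "k - 1 \<le> n" using kk by auto
      have z1: "zz n (k-1) = [Ga (k-3), Be (k-4)]" using zz_in[OF c(6,7)] c(1-5) by (simp only: zpath_def if_False)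
      have z2: "zz n k = [Ga (k-2), Be (k-3)]" using zz_in[of k] kk by (simp add: zpath_def)
      show ?thesis unfolding z1 z2 by simp
    qed
    ultimately show ?thesis using eqv_lam[OF I4] 4 by metis
  next
    case 5
    have b: "2*k + 1 = 2*n+1" "2*k + 2*(n - 2) + 1 = 4*n-3" using 5 n4 by auto
    have "map (xx n) [2*k + 1..<2*k + 2*(n - 2) + 1] = map X [2*n+1-2*n..<4*n-3-2*n]"
      unfolding b using n4 by (intro xx_wrap) auto
    also have "4*n-3-2*n = 2*n-3" by simp
    finally have "map (xx n) [2*k + 1..<2*k + 2*(n - 2) + 1] = map X [1..<2*n-3]" by simp
    moreover have "zz n k @ zz n (k - 1) = [Y2n, Ga (n-3), Be (n-4)]"
    proof -
      have c: "n - 1 \<noteq> 1" "n - 1 \<noteq> 2" "n - 1 \<noteq> n" "n - 1 - 2 = n - 3" "n - 1 - 3 = n - 4"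
        "1 \<le> n - 1" "n - 1 \<le> n" using n4 by auto
      have z1: "zz n (n-1) = [Ga (n-3), Be (n-4)]" using zz_in[OF c(6,7)] c(1-5) by (simp only: zpath_def if_False)
      have z2: "zz n n = [Y2n]" using zz_in[of n] n4 by (simp add: zpath_def)
      show ?thesis using 5 z1 z2 by simp
    qed
    ultimately show ?thesis using eqv_lam[OF In] by metis
  qed
qed

lemma partII: assumes k: "1 \<le> k" "k \<le> n"
  shows "lam_eq n (pel n ([xx n (2*k + 1), xx n (2*k + 2)] @ zz n (k + 1)))
              (pel n (zz n k @ [xx n (2*k - 1), xx n (2*k)]))"
proof -
  have r: "[xx n (2*k - 1), xx n (2*k)] = [X (2*k-1), X (2*k)]"
    using k by (simp add: xx_def bix_id)
  consider "k = 1" | "k = 2" | "3 \<le> k \<and> k + 2 \<le> n" | "k + 1 = n" | "k = n" using k by linarith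
  then show ?thesis
  proof cases
    case 1
    have "[xx n (2*k + 1), xx n (2*k + 2)] @ zz n (k + 1) = [X 3, X 4] @ [Y4]"
      using 1 n4 by (simp add: xx_def bix_id zz_in zpath_def)
    moreover have "zz n k @ [X (2*k-1), X (2*k)] = map Al [0..<n-2] @ [X 1, X 2]"
      using 1 n4 by (simp add: zz_in zpath_def)
    ultimately show ?thesis using eqv_lam[OF II1] r by metis
  next
    case 2
    have "[xx n (2*k + 1), xx n (2*k + 2)] @ zz n (k + 1) = [X 5, X 6] @ [Ga 1, Be 0]"
      using 2 n4 by (simp add: xx_def bix_id zz_in zpath_def)
    moreover have "zz n k @ [X (2*k-1), X (2*k)] = [Y4] @ [X 3, X 4]"
      using 2 n4 by (simp add: zz_in zpath_def)
    ultimately show ?thesis using eqv_lam[OF II2] r by metis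
  next
    case 3
    have "[xx n (2*k + 1), xx n (2*k + 2)] @ zz n (k + 1) = [X (2*k+1), X (2*k+2)] @ [Ga (k-1), Be (k-2)]"
      using 3 n4 by (simp add: xx_def bix_id zz_in zpath_def numeral_eq_Suc)
    moreover have "zz n k @ [X (2*k-1), X (2*k)] = [Ga (k-2), Be (k-3)] @ [X (2*k-1), X (2*k)]"
      using 3 n4 by (simp add: zz_in zpath_def)
    ultimately show ?thesis using eqv_lam[OF IIk] 3 r by metis
  next
    case 4
    have b: "2*k+1 = 2*n-1" "2*k+2 = 2*n" "k+1 = n" using 4 by auto
    have "[xx n (2*k + 1), xx n (2*k + 2)] @ zz n (k + 1) = [X (2*n-1), X (2*n)] @ [Y2n]"
      unfolding b using n4 by (simp add: xx_def bix_id zz_in zpath_def)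
    moreover have "zz n k @ [X (2*k-1), X (2*k)] = [Ga (n-3), Be (n-4)] @ [X (2*n-3), X (2*n-2)]"
    proof -
      have kk: "k = n - 1" using 4 by simp
      show ?thesis unfolding kk using n4 by (simp add: zz_in zpath_def, arith)
    qed
    ultimately show ?thesis using eqv_lam[OF IIn1] r by metis
  next
    case 5
    have "[xx n (2*k + 1), xx n (2*k + 2)] @ zz n (k + 1) = [X 1, X 2] @ map Al [0..<n-2]"
      using 5 n4 by (simp add: xx_def bix_wrap zzS zpath_def)
    moreover have "zz n k @ [X (2*k-1), X (2*k)] = [Y2n] @ [X (2*n-1), X (2*n)]"
      using 5 n4 by (simp add: zz_in zpath_def)
    ultimately show ?thesis using eqv_lam[OF IIn] r by metis
  qed
qed

end

theorem proposition3p5: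
  fixes n :: nat
  assumes "n \<ge> 4"
  shows "\<forall>k\<in>{1..n}.
     lam_eq n (pel n (zz n k @ zz n (k - 1)))
              (pel n (map (xx n) [2*k + 1..<2*k + 2*(n - 2) + 1]))
   \<and> lam_eq n (pel n ([xx n (2*k + 1), xx n (2*k + 2)] @ zz n (k + 1)))
              (pel n (zz n k @ [xx n (2*k - 1), xx n (2*k)]))"
  using partI[OF assms] partII[OF assms] by auto

end
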